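(* Let $e$ be a closed term with $\vdash e:\perp\to X$, where $X$ is a propositional variable. Then for each $\lambda$-variable $x$ and each finite sequence of $\lambda$-variables $\bar y$, $(e\;x)\;\bar y\triangleright^*\underline{\mu}.x$, i.e. $(e\;x)\;\bar y$ reduces to some element of $M_x$.
   Context: $\lambda\mu$-terms: $t::= x\mid \lambda x.t\mid (t\;t)\mid \mu a.t\mid (a\;t)$ over disjoint infinite sets of $\lambda$-variables and $\mu$-variables; types built from propositional variables and $\perp$ with $\to$. Reduction $(\lambda x.u\;v)\triangleright u[x:=v]$, $(\mu a.u\;v)\triangleright\mu a.u[a:=^*v]$ ($u[a:=^*v]$ replaces each subterm $(a\;w)$ of $u$ by $(a\;(w\;v))$), $\triangleright^*$ its reflexive transitive compatible closure. Typing rules: (ax) $\Gamma\vdash x:A;\Delta$ if $x:A\in\Gamma$; ($\to_i$) from $\Gamma,x:A\vdash t:B;\Delta$ infer $\Gamma\vdash\lambda x.t:A\to B;\Delta$; ($\to_e$) from $\Gamma\vdash u:A\to B;\Delta$, $\Gamma\vdash v:A;\Delta$ infer $\Gamma\vdash(u\;v):B;\Delta$; ($\mu$) from $\Gamma\vdash t:\perp;\Delta,a:A$ infer $\Gamma\vdash\mu a.t:A;\Delta$; ($\perp$) from $\Gamma\vdash t:A;\Delta,a:A$ infer $\Gamma\vdash(a\;t):\perp;\Delta,a:A$; $\vdash$ means empty contexts. For a sequence $\bar y=y_1\dots y_n$, $t\;\bar y=((t\;y_1)\dots y_n)$. For a term $t$, $M_t$ is the smallest set containing $t$ such that $u\in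 M_t$ and $a$ a $\mu$-variable imply $\mu a.u\in M_t$ and $(a\;u)\in M_t$; $\underline{\mu}.t$ denotes an arbitrary element of $M_t$. *)

theory Defs
  imports Main
begin

text \<open>Lambda-mu terms up to alpha-equivalence, with de Bruijn indices.
  Two separate index namespaces: lambda-variables (LVar) and mu-variables.
  Named a t is the term (a t).\<close>

datatype trm =
    LVar nat
  | Lam trm
  | App trm trm
  | Mu trm
  | Named nat trm

fun liftL :: "nat \<Rightarrow> trm \<Rightarrow> trm" where
  "liftL k (LVar i) = (if i < k then LVar i else LVar (Suc i))"
| "liftL k (Lam t) = Lam (liftL (Suc k) t)"
| "liftL k (App t u) = App (liftL k t) (liftL k u)"
| "liftL k (Mu t) = Mu (liftL k t)"
| "liftL k (Named a t) = Named a (liftL k t)"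

fun liftM :: "nat \<Rightarrow> trm \<Rightarrow> trm" where
  "liftM k (LVar i) = LVar i"
| "liftM k (Lam t) = Lam (liftM k t)"
| "liftM k (App t u) = App (liftM k t) (liftM k u)"
| "liftM k (Mu t) = Mu (liftM (Suc k) t)"
| "liftM k (Named a t) = Named (if a < k then a else Suc a) (liftM k t)"

text \<open>Capture-avoiding substitution t[k := s] of a lambda-variable
  (the binder for k is removed, so higher indices are decremented).\<close>
fun substL :: "trm \<Rightarrow> nat \<Rightarrow> trm \<Rightarrow> trm" where
  "substL (LVar i) k s = (if i < k then LVar i else if i = k then s else LVar (i - 1))"
| "substL (Lam t) k s = Lam (substL t (Suc k) (liftL 0 s))"
| "substL (App t u) k s = App (substL t k s) (substL u k s)"
| "substL (Mu t) k s = Mu (substL t k (liftM 0 s))"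
| "substL (Named a t) k s = Named a (substL t k s)"

text \<open>Structural substitution u[a :=* v]: each subterm (a w) becomes (a (w v)).
  The binder of a is kept, so no index is removed.\<close>
fun substM :: "trm \<Rightarrow> nat \<Rightarrow> trm \<Rightarrow> trm" where
  "substM (LVar i) a v = LVar i"
| "substM (Lam t) a v = Lam (substM t a (liftL 0 v))"
| "substM (App t u) a v = App (substM t a v) (substM u a v)"
| "substM (Mu t) a v = Mu (substM t (Suc a) (liftM 0 v))"
| "substM (Named b t) a v =
     (if b = a then Named b (App (substM t a v) v) else Named b (substM t a v))"

inductive red :: "trm \<Rightarrow> trm \<Rightarrow> bool" (infix "\<rhd>" 50) where
  beta: "App (Lam u) v \<rhd> substL u 0 v"
| mu:   "App (Mu u) v \<rhd> Mu (substM u 0 (liftM 0 v))"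
| lam:  "t \<rhd> t' \<Longrightarrow> Lam t \<rhd> Lam t'"
| appL: "t \<rhd> t' \<Longrightarrow> App t u \<rhd> App t' u"
| appR: "u \<rhd> u' \<Longrightarrow> App t u \<rhd> App t u'"
| muC:  "t \<rhd> t' \<Longrightarrow> Mu t \<rhd> Mu t'"
| named: "t \<rhd> t' \<Longrightarrow> Named a t \<rhd> Named a t'"

abbreviation reds :: "trm \<Rightarrow> trm \<Rightarrow> bool" (infix "\<rhd>\<^sup>*" 50) where
  "t \<rhd>\<^sup>* u \<equiv> red\<^sup>*\<^sup>* t u"

datatype ty = TVar nat | Bot | Arr ty ty (infixr "\<Rightarrow>\<^sub>T" 60)

inductive typing :: "ty list \<Rightarrow> trm \<Rightarrow> ty \<Rightarrow> ty list \<Rightarrow> bool" where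
  ax:   "i < length \<Gamma> \<Longrightarrow> typing \<Gamma> (LVar i) (\<Gamma> ! i) \<Delta>"
| arrI: "typing (A # \<Gamma>) t B \<Delta> \<Longrightarrow> typing \<Gamma> (Lam t) (A \<Rightarrow>\<^sub>T B) \<Delta>"
| arrE: "typing \<Gamma> u (A \<Rightarrow>\<^sub>T B) \<Delta> \<Longrightarrow> typing \<Gamma> v A \<Delta> \<Longrightarrow> typing \<Gamma> (App u v) B \<Delta>"
| muI:  "typing \<Gamma> t Bot (A # \<Delta>) \<Longrightarrow> typing \<Gamma> (Mu t) A \<Delta>"
| botI: "a < length \<Delta> \<Longrightarrow> typing \<Gamma> t (\<Delta> ! a) \<Delta> \<Longrightarrow> typing \<Gamma> (Named a t) Bot \<Delta>"

text \<open>Closed terms: no free lambda- or mu-variables (k, m = number of enclosing binders).\<close>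
fun closed_at :: "nat \<Rightarrow> nat \<Rightarrow> trm \<Rightarrow> bool" where
  "closed_at k m (LVar i) = (i < k)"
| "closed_at k m (Lam t) = closed_at (Suc k) m t"
| "closed_at k m (App t u) = (closed_at k m t \<and> closed_at k m u)"
| "closed_at k m (Mu t) = closed_at k (Suc m) t"
| "closed_at k m (Named a t) = (a < m \<and> closed_at k m t)"

definition closed :: "trm \<Rightarrow> bool" where
  "closed t \<longleftrightarrow> closed_at 0 0 t"

definition apps :: "trm \<Rightarrow> trm list \<Rightarrow> trm" where
  "apps t us = foldl App t us"

inductive_set Mset :: "trm \<Rightarrow> trm set" for t :: trm where
  base: "t \<in> Mset t"
| mu:   "u \<in> Mset t \<Longrightarrow> Mu u \<in> Mset t"
| named: "u \<in> Mset t \<Longrightarrow> Named a u \<in> Mset t"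

end

theory Submission imports Defs begin

definition upr :: "(nat \<Rightarrow> nat) \<Rightarrow> nat \<Rightarrow> nat" where
  "upr \<rho> j = (case j of 0 \<Rightarrow> 0 | Suc k \<Rightarrow> Suc (\<rho> k))"

lemma upr_0[simp]: "upr \<rho> 0 = 0" and upr_Suc[simp]: "upr \<rho> (Suc k) = Suc (\<rho> k)"
  by (simp_all add: upr_def)

lemma upr_comp[simp]: "upr \<rho> \<circ> upr \<rho>' = upr (\<rho> \<circ> \<rho>')"
  by (auto simp: fun_eq_iff upr_def split: nat.split)

lemma upr_id[simp]: "upr id = id" "upr (\<lambda>x. x) = (\<lambda>x. x)"
  by (auto simp: fun_eq_iff upr_def split: nat.split)

lemma upr_Suc_comp[simp]: "upr \<rho> \<circ> Suc = Suc \<circ> \<rho>"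
  by (auto simp: fun_eq_iff)

fun ren :: "(nat \<Rightarrow> nat) \<Rightarrow> trm \<Rightarrow> trm" where
  "ren \<rho> (LVar i) = LVar i"
| "ren \<rho> (Lam t) = Lam (ren \<rho> t)"
| "ren \<rho> (App t u) = App (ren \<rho> t) (ren \<rho> u)"
| "ren \<rho> (Mu t) = Mu (ren (upr \<rho>) t)"
| "ren \<rho> (Named a t) = Named (\<rho> a) (ren \<rho> t)"

lemma ren_comp[simp]: "ren \<rho> (ren \<rho>' t) = ren (\<rho> \<circ> \<rho>') t"
  by (induction t arbitrary: \<rho> \<rho>') auto

lemma ren_id[simp]: "ren id t = t" "ren (\<lambda>x. x) t = t"
  by (induction t) (auto simp flip: id_def)

lemma liftM_ren: "liftM k t = ren (\<lambda>j. if j < k then j else Suc j) t"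
proof (induction t arbitrary: k)
  case (Mu t)
  have "upr (\<lambda>j. if j < k then j else Suc j) = (\<lambda>j. if j < Suc k then j else Suc j)"
    by (auto simp: fun_eq_iff upr_def split: nat.split)
  with Mu show ?case by simp
qed auto

lemma liftM0[simp]: "liftM 0 t = ren Suc t"
  by (simp add: liftM_ren)

lemma ren_liftL[simp]: "ren \<rho> (liftL k t) = liftL k (ren \<rho> t)"
  by (induction t arbitrary: \<rho> k) auto

lemma ren_substL: "ren \<rho> (substL t k u) = substL (ren \<rho> t) k (ren \<rho> u)"
  by (induction t arbitrary: \<rho> k u) auto

lemma ren_substM: "(\<forall>b. \<rho> b = \<rho> a \<longrightarrow> b = a) \<Longrightarrow>
   ren \<rho> (substM t a v) = substM (ren \<rho> t) (\<rho> a) (ren \<rho> v)"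
proof (induction t arbitrary: \<rho> a v)
  case (Mu t)
  have "\<forall>b. upr \<rho> b = upr \<rho> (Suc a) \<longrightarrow> b = Suc a"
    using Mu.prems by (auto simp: upr_def split: nat.split)
  from Mu.IH[OF this] show ?case by simp
qed auto

lemma substM_ren_fresh: "(\<forall>b. \<rho> b \<noteq> a) \<Longrightarrow> substM (ren \<rho> s) a v = ren \<rho> s"
proof (induction s arbitrary: \<rho> a v)
  case (Mu t)
  have "\<forall>b. upr \<rho> b \<noteq> Suc a"
    using Mu.prems by (auto simp: upr_def split: nat.split)
  from Mu.IH[OF this] show ?case by simp
qed auto

lemma liftL_liftL: "i \<le> j \<Longrightarrow> liftL i (liftL j u) = liftL (Suc j) (liftL i u)"
  by (induction u arbitrary: i j) auto

lemma substL_liftL: "substL (liftL k s) k u = s"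
  by (induction s arbitrary: k u) auto

lemma substL_liftL_comm: "j \<le> k \<Longrightarrow> substL (liftL j s) (Suc k) (liftL j u) = liftL j (substL s k u)"
  by (induction s arbitrary: j k u) (auto simp: liftL_liftL)

lemma substM_liftL: "substM (liftL j s) a (liftL j v) = liftL j (substM s a v)"
  by (induction s arbitrary: j a v) (auto simp: liftL_liftL)

lemma apps_Cons[simp]: "apps t (u # s) = apps (App t u) s"
  and apps_Nil[simp]: "apps t [] = t"
  by (simp_all add: apps_def)

lemma apps_snoc: "apps t (s @ [v]) = App (apps t s) v"
  by (simp add: apps_def)

lemma ren_apps[simp]: "ren \<rho> (apps t s) = apps (ren \<rho> t) (map (ren \<rho>) s)"
  by (induction s arbitrary: t) auto

lemma substL_apps[simp]: "substL (apps t s) k u = apps (substL t k u) (map (\<lambda>w. substL w k u) s)"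
  by (induction s arbitrary: t) auto

lemma substM_apps[simp]: "substM (apps t s) a v = apps (substM t a v) (map (\<lambda>w. substM w a v) s)"
  by (induction s arbitrary: t) auto


fun psub :: "(nat \<Rightarrow> trm) \<Rightarrow> (nat \<Rightarrow> trm list) \<Rightarrow> (nat \<Rightarrow> nat) \<Rightarrow> trm \<Rightarrow> trm" where
  "psub \<sigma> \<tau> \<rho> (LVar i) = \<sigma> i"
| "psub \<sigma> \<tau> \<rho> (Lam t) = Lam (psub (\<lambda>i. case i of 0 \<Rightarrow> LVar 0 | Suc j \<Rightarrow> liftL 0 (\<sigma> j))
                                  (\<lambda>j. map (liftL 0) (\<tau> j)) \<rho> t)"
| "psub \<sigma> \<tau> \<rho> (App t u) = App (psub \<sigma> \<tau> \<rho> t) (psub \<sigma> \<tau> \<rho> u)"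
| "psub \<sigma> \<tau> \<rho> (Mu t) = Mu (psub (\<lambda>i. ren Suc (\<sigma> i))
                                  (\<lambda>j. case j of 0 \<Rightarrow> [] | Suc k \<Rightarrow> map (ren Suc) (\<tau> k)) (upr \<rho>) t)"
| "psub \<sigma> \<tau> \<rho> (Named a t) = Named (\<rho> a) (apps (psub \<sigma> \<tau> \<rho> t) (\<tau> a))"

lemma psub_cong: "\<sigma> = \<sigma>' \<Longrightarrow> \<tau> = \<tau>' \<Longrightarrow> \<rho> = \<rho>' \<Longrightarrow> psub \<sigma> \<tau> \<rho> t = psub \<sigma>' \<tau>' \<rho>' t"
  by simp

lemma psub_id: "(\<forall>i. \<sigma> i = LVar i) \<Longrightarrow> (\<forall>j. \<tau> j = []) \<Longrightarrow> (\<forall>j. \<rho> j = j) \<Longrightarrow> psub \<sigma> \<tau> \<rho> t = t"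
proof (induction t arbitrary: \<sigma> \<tau> \<rho>)
  case (Lam t)
  show ?case by (simp, rule Lam.IH) (use Lam.prems in \<open>auto split: nat.split\<close>)
next
  case (Mu t)
  show ?case by (simp, rule Mu.IH) (use Mu.prems in \<open>auto simp: upr_def split: nat.split\<close>)
qed auto

lemma ren_psub: "ren \<rho>' (psub \<sigma> \<tau> \<rho> t) = psub (\<lambda>i. ren \<rho>' (\<sigma> i)) (\<lambda>j. map (ren \<rho>') (\<tau> j)) (\<rho>' \<circ> \<rho>) t"
proof (induction t arbitrary: \<sigma> \<tau> \<rho> \<rho>')
  case (Lam t)
  have e: "(\<lambda>i. ren \<rho>' (case i of 0 \<Rightarrow> LVar 0 | Suc j \<Rightarrow> liftL 0 (\<sigma> j))) =
           (\<lambda>i. case i of 0 \<Rightarrow> LVar 0 | Suc j \<Rightarrow> liftL 0 (ren \<rho>' (\<sigma> j)))"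
    by (auto simp: fun_eq_iff split: nat.split)
  show ?case by (simp add: Lam.IH e comp_def)
next
  case (Mu t)
  have e: "(\<lambda>j. map (ren (upr \<rho>')) (case j of 0 \<Rightarrow> [] | Suc k \<Rightarrow> map (ren Suc) (\<tau> k))) =
     (\<lambda>j. case j of 0 \<Rightarrow> [] | Suc k \<Rightarrow> map (ren Suc) (map (ren \<rho>') (\<tau> k)))"
    by (auto simp: fun_eq_iff split: nat.split)
  show ?case by (simp add: Mu.IH e, rule psub_cong) (auto simp: fun_eq_iff comp_def split: nat.split)
qed auto

lemma substL_psub: "substL (psub \<sigma> \<tau> \<rho> t) k u =
   psub (\<lambda>i. substL (\<sigma> i) k u) (\<lambda>j. map (\<lambda>w. substL w k u) (\<tau> j)) \<rho> t"
proof (induction t arbitrary: \<sigma> \<tau> \<rho> k u)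
  case (Lam t)
  have e: "(\<lambda>i. substL (case i of 0 \<Rightarrow> LVar 0 | Suc j \<Rightarrow> liftL 0 (\<sigma> j)) (Suc k) (liftL 0 u)) =
           (\<lambda>i. case i of 0 \<Rightarrow> LVar 0 | Suc j \<Rightarrow> liftL 0 (substL (\<sigma> j) k u))"
    by (auto simp: fun_eq_iff substL_liftL_comm split: nat.split)
  show ?case by (simp add: Lam.IH e substL_liftL_comm comp_def)
next
  case (Mu t)
  have e: "(\<lambda>i. substL (ren Suc (\<sigma> i)) k (ren Suc u)) = (\<lambda>i. ren Suc (substL (\<sigma> i) k u))"
    by (simp add: ren_substL)
  have e2: "(\<lambda>j. map (\<lambda>w. substL w k (ren Suc u)) (case j of 0 \<Rightarrow> [] | Suc ka \<Rightarrow> map (ren Suc) (\<tau> ka))) =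
     (\<lambda>j. case j of 0 \<Rightarrow> [] | Suc ka \<Rightarrow> map (ren Suc) (map (\<lambda>w. substL w k u) (\<tau> ka)))"
    by (auto simp: fun_eq_iff ren_substL split: nat.split)
  show ?case by (simp add: Mu.IH e e2, rule psub_cong) (auto simp: fun_eq_iff split: nat.split)
qed auto

lemma substM_psub: "substM (psub \<sigma> \<tau> \<rho> t) a v =
   psub (\<lambda>i. substM (\<sigma> i) a v)
        (\<lambda>j. if \<rho> j = a then map (\<lambda>w. substM w a v) (\<tau> j) @ [v] else map (\<lambda>w. substM w a v) (\<tau> j)) \<rho> t"
proof (induction t arbitrary: \<sigma> \<tau> \<rho> a v)
  case (Lam t)
  have e: "(\<lambda>i. substM (case i of 0 \<Rightarrow> LVar 0 | Suc j \<Rightarrow> liftL 0 (\<sigma> j)) a (liftL 0 v)) =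
           (\<lambda>i. case i of 0 \<Rightarrow> LVar 0 | Suc j \<Rightarrow> liftL 0 (substM (\<sigma> j) a v))"
    by (auto simp: fun_eq_iff substM_liftL split: nat.split)
  have e2: "(\<lambda>j. if \<rho> j = a then map (\<lambda>w. substM w a (liftL 0 v)) (map (liftL 0) (\<tau> j)) @ [liftL 0 v]
               else map (\<lambda>w. substM w a (liftL 0 v)) (map (liftL 0) (\<tau> j))) =
     (\<lambda>j. map (liftL 0) (if \<rho> j = a then map (\<lambda>w. substM w a v) (\<tau> j) @ [v] else map (\<lambda>w. substM w a v) (\<tau> j)))"
    by (auto simp: fun_eq_iff substM_liftL)
  show ?case by (simp add: Lam.IH e e2)
next
  case (Mu t)
  have inj: "\<forall>b. Suc b = Suc a \<longrightarrow> b = a" by simp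
  have e: "(\<lambda>i. substM (ren Suc (\<sigma> i)) (Suc a) (ren Suc v)) = (\<lambda>i. ren Suc (substM (\<sigma> i) a v))"
    using ren_substM[OF inj] by simp
  have e2: "(\<lambda>j. if upr \<rho> j = Suc a
               then map (\<lambda>w. substM w (Suc a) (ren Suc v)) (case j of 0 \<Rightarrow> [] | Suc k \<Rightarrow> map (ren Suc) (\<tau> k)) @ [ren Suc v]
               else map (\<lambda>w. substM w (Suc a) (ren Suc v)) (case j of 0 \<Rightarrow> [] | Suc k \<Rightarrow> map (ren Suc) (\<tau> k))) =
     (\<lambda>j. case j of 0 \<Rightarrow> [] | Suc k \<Rightarrow> map (ren Suc)
          (if \<rho> k = a then map (\<lambda>w. substM w a v) (\<tau> k) @ [v] else map (\<lambda>w. substM w a v) (\<tau> k)))"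
    using ren_substM[OF inj] by (auto simp: fun_eq_iff split: nat.split)
  show ?case by (simp add: Mu.IH e e2)
next
  case (Named b t)
  show ?case by (simp add: Named.IH apps_snoc)
qed auto


lemma red_ren: "t \<rhd> t' \<Longrightarrow> ren \<rho> t \<rhd> ren \<rho> t'"
proof (induction arbitrary: \<rho> rule: red.induct)
  case (beta u v)
  show ?case using red.beta[of "ren \<rho> u" "ren \<rho> v"] by (simp add: ren_substL)
next
  case (mu u v)
  have inj: "\<forall>b. upr \<rho> b = upr \<rho> 0 \<longrightarrow> b = 0" by (auto simp: upr_def split: nat.split)
  show ?case using red.mu[of "ren (upr \<rho>) u" "ren \<rho> v"] ren_substM[OF inj, of u "ren Suc v"] by simp
qed (auto intro: red.intros)

lemma reds_ren: "t \<rhd>\<^sup>* t' \<Longrightarrow> ren \<rho> t \<rhd>\<^sup>* ren \<rho> t'"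
  by (induction rule: rtranclp_induct) (auto intro: rtranclp.rtrancl_into_rtrancl red_ren)

lemma reds_appL: "t \<rhd>\<^sup>* t' \<Longrightarrow> App t u \<rhd>\<^sup>* App t' u"
  by (induction rule: rtranclp_induct) (auto intro: rtranclp.rtrancl_into_rtrancl red.appL)

lemma reds_Mu: "t \<rhd>\<^sup>* t' \<Longrightarrow> Mu t \<rhd>\<^sup>* Mu t'"
  by (induction rule: rtranclp_induct) (auto intro: rtranclp.rtrancl_into_rtrancl red.muC)

lemma reds_Named: "t \<rhd>\<^sup>* t' \<Longrightarrow> Named a t \<rhd>\<^sup>* Named a t'"
  by (induction rule: rtranclp_induct) (auto intro: rtranclp.rtrancl_into_rtrancl red.named)

lemma reds_apps: "t \<rhd>\<^sup>* t' \<Longrightarrow> apps t s \<rhd>\<^sup>* apps t' s"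
  by (induction s arbitrary: t t') (auto intro: reds_appL)

lemma Mset_ren: "m \<in> Mset t0 \<Longrightarrow> t0 = LVar x \<Longrightarrow> ren \<rho> m \<in> Mset (LVar x)"
  by (induction arbitrary: \<rho> rule: Mset.induct) (auto intro: Mset.intros)

definition Nx :: "nat \<Rightarrow> trm set" where
  "Nx x = {t. \<exists>m \<in> Mset (LVar x). t \<rhd>\<^sup>* m}"

lemma Nx_ren: "t \<in> Nx x \<Longrightarrow> ren \<rho> t \<in> Nx x"
  unfolding Nx_def using Mset_ren reds_ren by blast

lemma Nx_back: "t \<rhd>\<^sup>* t' \<Longrightarrow> t' \<in> Nx x \<Longrightarrow> t \<in> Nx x"
  unfolding Nx_def by (auto intro: rtranclp_trans)

lemma Nx_Mu: "t \<in> Nx x \<Longrightarrow> Mu t \<in> Nx x"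
  unfolding Nx_def by (auto intro: reds_Mu Mset.mu)

lemma Nx_Named: "t \<in> Nx x \<Longrightarrow> Named a t \<in> Nx x"
  unfolding Nx_def by (auto intro: reds_Named Mset.named)

lemma Nx_var: "LVar x \<in> Nx x"
  unfolding Nx_def by (auto intro: Mset.base)

fun stk :: "nat \<Rightarrow> ty \<Rightarrow> trm list \<Rightarrow> bool" where
  "stk x (TVar n) s = (\<exists>ys. s = map LVar ys)"
| "stk x Bot s = (s = [])"
| "stk x (A \<Rightarrow>\<^sub>T B) [] = False"
| "stk x (A \<Rightarrow>\<^sub>T B) (u # s) = ((\<forall>\<rho> s'. stk x A s' \<longrightarrow> apps (ren \<rho> u) s' \<in> Nx x) \<and> stk x B s)"

definition R :: "nat \<Rightarrow> ty \<Rightarrow> trm \<Rightarrow> bool" where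
  "R x A t = (\<forall>\<rho> s. stk x A s \<longrightarrow> apps (ren \<rho> t) s \<in> Nx x)"

lemma R_ren: "R x A t \<Longrightarrow> R x A (ren \<rho> t)"
  unfolding R_def by (metis ren_comp)

lemma stk_ren: "stk x A s \<Longrightarrow> stk x A (map (ren \<rho>) s)"
proof (induction A arbitrary: s)
  case (TVar n) then show ?case by (auto simp: comp_def)
next
  case Bot then show ?case by auto
next
  case (Arr A B)
  then show ?case by (cases s) auto
qed

lemma mu_steps:
  assumes "\<forall>i w. substM (\<sigma> i) 0 w = \<sigma> i"
    and "\<forall>j w. map (\<lambda>u. substM u 0 w) (\<tau> j) = \<tau> j"
    and "\<forall>j. \<rho> j = 0 \<longleftrightarrow> j = 0"
  shows "apps (Mu (psub \<sigma> \<tau> \<rho> t)) s \<rhd>\<^sup>* Mu (psub \<sigma> (\<tau>(0 := \<tau> 0 @ map (ren Suc) s)) \<rho> t)"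
  using assms(2)
proof (induction s arbitrary: \<tau>)
  case Nil
  then show ?case by (simp add: fun_upd_idem)
next
  case (Cons v s)
  define \<tau>' where "\<tau>' = \<tau>(0 := \<tau> 0 @ [ren Suc v])"
  have step: "App (Mu (psub \<sigma> \<tau> \<rho> t)) v \<rhd> Mu (psub \<sigma> \<tau>' \<rho> t)"
  proof -
    have "App (Mu (psub \<sigma> \<tau> \<rho> t)) v \<rhd> Mu (substM (psub \<sigma> \<tau> \<rho> t) 0 (liftM 0 v))"
      by (rule red.mu)
    also have "substM (psub \<sigma> \<tau> \<rho> t) 0 (liftM 0 v) = psub \<sigma> \<tau>' \<rho> t"
      unfolding substM_psub \<tau>'_def
    proof (rule psub_cong)
      show "(\<lambda>i. substM (\<sigma> i) 0 (liftM 0 v)) = \<sigma>" using assms(1) by (simp add: fun_eq_iff)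
      show "(\<lambda>j. if \<rho> j = 0 then map (\<lambda>w. substM w 0 (liftM 0 v)) (\<tau> j) @ [liftM 0 v]
              else map (\<lambda>w. substM w 0 (liftM 0 v)) (\<tau> j)) = \<tau>(0 := \<tau> 0 @ [ren Suc v])"
        using assms(3) Cons.prems by (simp add: fun_eq_iff)
    qed simp
    finally show ?thesis .
  qed
  have p': "\<forall>j w. map (\<lambda>u. substM u 0 w) (\<tau>' j) = \<tau>' j"
    using Cons.prems by (simp add: \<tau>'_def substM_ren_fresh)
  have "apps (Mu (psub \<sigma> \<tau> \<rho> t)) (v # s) \<rhd>\<^sup>* apps (Mu (psub \<sigma> \<tau>' \<rho> t)) s"
    using reds_apps[of "App (Mu (psub \<sigma> \<tau> \<rho> t)) v" "Mu (psub \<sigma> \<tau>' \<rho> t)" s] step by (simp add: r_into_rtranclp)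
  also have "\<dots> \<rhd>\<^sup>* Mu (psub \<sigma> (\<tau>'(0 := \<tau>' 0 @ map (ren Suc) s)) \<rho> t)"
    by (rule Cons.IH[OF p'])
  also have "\<tau>'(0 := \<tau>' 0 @ map (ren Suc) s) = \<tau>(0 := \<tau> 0 @ map (ren Suc) (v # s))"
    by (simp add: \<tau>'_def)
  finally show ?case .
qed


lemma adequacy:
  "typing \<Gamma> t A \<Delta> \<Longrightarrow> (\<forall>i<length \<Gamma>. R x (\<Gamma>!i) (\<sigma> i)) \<Longrightarrow> (\<forall>j<length \<Delta>. stk x (\<Delta>!j) (\<tau> j))
   \<Longrightarrow> R x A (psub \<sigma> \<tau> \<rho> t)"
proof (induction arbitrary: \<sigma> \<tau> \<rho> rule: typing.induct)
  case (ax i \<Gamma> \<Delta>)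
  then show ?case by simp
next
  case (arrI A \<Gamma> t B \<Delta>)
  show ?case unfolding R_def
  proof (intro allI impI)
    fix \<rho>' s assume st: "stk x (A \<Rightarrow>\<^sub>T B) s"
    then obtain u s' where s: "s = u # s'" and uR: "R x A u" and s': "stk x B s'"
      by (cases s) (auto simp: R_def)
    define W where "W = psub (\<lambda>i. case i of 0 \<Rightarrow> LVar 0 | Suc j \<Rightarrow> liftL 0 (\<sigma> j))
                                  (\<lambda>j. map (liftL 0) (\<tau> j)) \<rho> t"
    define \<sigma>2 where "\<sigma>2 = (\<lambda>i. substL (ren \<rho>' (case i of 0 \<Rightarrow> LVar 0 | Suc j \<Rightarrow> liftL 0 (\<sigma> j))) 0 u)"
    define \<tau>2 where "\<tau>2 = (\<lambda>j. map (\<lambda>w. substL w 0 u) (map (ren \<rho>') (map (liftL 0) (\<tau> j))))"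
    have T: "substL (ren \<rho>' W) 0 u = psub \<sigma>2 \<tau>2 (\<rho>' \<circ> \<rho>) t"
      unfolding W_def ren_psub substL_psub \<sigma>2_def \<tau>2_def by simp
    have g1: "\<forall>i<length (A # \<Gamma>). R x ((A # \<Gamma>) ! i) (\<sigma>2 i)"
    proof (intro allI impI)
      fix i assume "i < length (A # \<Gamma>)"
      then show "R x ((A # \<Gamma>) ! i) (\<sigma>2 i)"
        using uR arrI.prems(1) by (cases i) (auto simp: \<sigma>2_def substL_liftL intro: R_ren)
    qed
    have g2: "\<forall>j<length \<Delta>. stk x (\<Delta> ! j) (\<tau>2 j)"
    proof (intro allI impI)
      fix j assume "j < length \<Delta>"
      moreover have "\<tau>2 j = map (ren \<rho>') (\<tau> j)" by (simp add: \<tau>2_def substL_liftL)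
      ultimately show "stk x (\<Delta> ! j) (\<tau>2 j)" using arrI.prems(2) stk_ren by auto
    qed
    have "R x B (psub \<sigma>2 \<tau>2 (\<rho>' \<circ> \<rho>) t)" by (rule arrI.IH[OF g1 g2])
    then have inN: "apps (psub \<sigma>2 \<tau>2 (\<rho>' \<circ> \<rho>) t) s' \<in> Nx x"
      using s' unfolding R_def by (metis ren_id(1))
    have "apps (ren \<rho>' (psub \<sigma> \<tau> \<rho> (Lam t))) s = apps (App (Lam (ren \<rho>' W)) u) s'"
      by (simp add: s W_def)
    also have "\<dots> \<rhd>\<^sup>* apps (substL (ren \<rho>' W) 0 u) s'"
      by (rule reds_apps) (simp add: r_into_rtranclp red.beta)
    finally show "apps (ren \<rho>' (psub \<sigma> \<tau> \<rho> (Lam t))) s \<in> Nx x"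
      using Nx_back inN T by metis
  qed
next
  case (arrE \<Gamma> u A B \<Delta> v)
  have RU: "R x (A \<Rightarrow>\<^sub>T B) (psub \<sigma> \<tau> \<rho> u)" and RV: "R x A (psub \<sigma> \<tau> \<rho> v)"
    using arrE.IH arrE.prems by auto
  show ?case unfolding R_def
  proof (intro allI impI)
    fix \<rho>' s assume st: "stk x B s"
    have "stk x (A \<Rightarrow>\<^sub>T B) (ren \<rho>' (psub \<sigma> \<tau> \<rho> v) # s)"
      using R_ren[OF RV, of \<rho>'] st by (simp add: R_def)
    then have "apps (ren \<rho>' (psub \<sigma> \<tau> \<rho> u)) (ren \<rho>' (psub \<sigma> \<tau> \<rho> v) # s) \<in> Nx x"
      using RU unfolding R_def by blast
    then show "apps (ren \<rho>' (psub \<sigma> \<tau> \<rho> (App u v))) s \<in> Nx x"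
      by simp
  qed
next
  case (muI \<Gamma> t A \<Delta>)
  show ?case unfolding R_def
  proof (intro allI impI)
    fix \<rho>' s assume st: "stk x A s"
    define \<sigma>' where "\<sigma>' = (\<lambda>i. ren (upr \<rho>') (ren Suc (\<sigma> i)))"
    define \<tau>' where "\<tau>' = (\<lambda>j. map (ren (upr \<rho>')) (case j of 0 \<Rightarrow> [] | Suc k \<Rightarrow> map (ren Suc) (\<tau> k)))"
    define \<rho>'' where "\<rho>'' = upr \<rho>' \<circ> upr \<rho>"
    have e: "ren \<rho>' (psub \<sigma> \<tau> \<rho> (Mu t)) = Mu (psub \<sigma>' \<tau>' \<rho>'' t)"
      unfolding \<sigma>'_def \<tau>'_def \<rho>''_def by (simp only: psub.simps ren.simps ren_psub)
    have c1: "\<forall>i w. substM (\<sigma>' i) 0 w = \<sigma>' i"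
      unfolding \<sigma>'_def by (simp add: substM_ren_fresh)
    have c2: "\<forall>j w. map (\<lambda>u. substM u 0 w) (\<tau>' j) = \<tau>' j"
      unfolding \<tau>'_def by (auto simp: substM_ren_fresh map_idI split: nat.split)
    have c3: "\<forall>j. \<rho>'' j = 0 \<longleftrightarrow> j = 0"
      unfolding \<rho>''_def by (simp add: upr_def split: nat.split)
    have red: "apps (Mu (psub \<sigma>' \<tau>' \<rho>'' t)) s \<rhd>\<^sup>* Mu (psub \<sigma>' (\<tau>'(0 := \<tau>' 0 @ map (ren Suc) s)) \<rho>'' t)"
      by (rule mu_steps[OF c1 c2 c3])
    have g1: "\<forall>i<length \<Gamma>. R x (\<Gamma> ! i) (\<sigma>' i)"
      using muI.prems(1) unfolding \<sigma>'_def by (auto intro: R_ren simp del: ren_comp)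
    have g2: "\<forall>j<length (A # \<Delta>). stk x ((A # \<Delta>) ! j) ((\<tau>'(0 := \<tau>' 0 @ map (ren Suc) s)) j)"
    proof (intro allI impI)
      fix j assume j: "j < length (A # \<Delta>)"
      show "stk x ((A # \<Delta>) ! j) ((\<tau>'(0 := \<tau>' 0 @ map (ren Suc) s)) j)"
      proof (cases j)
        case 0
        then show ?thesis using stk_ren[OF st] by (simp add: \<tau>'_def)
      next
        case (Suc k)
        have "\<tau>' (Suc k) = map (ren (Suc \<circ> \<rho>')) (\<tau> k)" by (simp add: \<tau>'_def)
        then show ?thesis using Suc j muI.prems(2) stk_ren by auto
      qed
    qed
    have "R x Bot (psub \<sigma>' (\<tau>'(0 := \<tau>' 0 @ map (ren Suc) s)) \<rho>'' t)"
      by (rule muI.IH[OF g1 g2])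
    then have "psub \<sigma>' (\<tau>'(0 := \<tau>' 0 @ map (ren Suc) s)) \<rho>'' t \<in> Nx x"
      unfolding R_def by (metis stk.simps(2) apps_Nil ren_id(1))
    then show "apps (ren \<rho>' (psub \<sigma> \<tau> \<rho> (Mu t))) s \<in> Nx x"
      using e red Nx_back Nx_Mu by metis
  qed
next
  case (botI a \<Delta> \<Gamma> t)
  have IH: "R x (\<Delta> ! a) (psub \<sigma> \<tau> \<rho> t)" using botI.IH botI.prems by auto
  show ?case unfolding R_def
  proof (intro allI impI)
    fix \<rho>' s assume "stk x Bot s"
    then have s: "s = []" by simp
    have "stk x (\<Delta> ! a) (map (ren \<rho>') (\<tau> a))" using botI.prems(2) botI.hyps(1) stk_ren by auto
    then have "apps (ren \<rho>' (psub \<sigma> \<tau> \<rho> t)) (map (ren \<rho>') (\<tau> a)) \<in> Nx x"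
      using IH unfolding R_def by blast
    then show "apps (ren \<rho>' (psub \<sigma> \<tau> \<rho> (Named a t))) s \<in> Nx x"
      by (simp add: s Nx_Named)
  qed
qed


theorem mainTheorem7:
  fixes e :: trm and X :: nat and x :: nat and ys :: "nat list"
  assumes "closed e"
    and "typing [] e (Bot \<Rightarrow>\<^sub>T TVar X) []"
  shows "\<exists>t \<in> Mset (LVar x). apps (App e (LVar x)) (map LVar ys) \<rhd>\<^sup>* t"
proof -
  have "R x (Bot \<Rightarrow>\<^sub>T TVar X) (psub LVar (\<lambda>_. []) id e)"
    by (rule adequacy[OF assms(2)]) auto
  then have Re: "R x (Bot \<Rightarrow>\<^sub>T TVar X) e"
    by (simp add: psub_id)
  have "stk x (Bot \<Rightarrow>\<^sub>T TVar X) (LVar x # map LVar ys)"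
    by (auto simp: Nx_var)
  then have "apps (ren id e) (LVar x # map LVar ys) \<in> Nx x"
    using Re unfolding R_def by blast
  then show ?thesis by (simp add: Nx_def)
qed

end
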